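(* For $r=1,\dots,N$, $$Z_r=\sum_{\substack{\mu\subseteq\lambda\\|\mu|=r}}\ \sum_{\nu\subseteq\mu}\left[\left(\prod_{i=1}^n(1-i)^{\mu_i-\nu_i}\binom{\lambda_i-\nu_i}{\lambda_i-\mu_i}\right)\times\left(\sum_{w\in S_n}\mathrm{sgn}(w)T_{w1,1}^{(\nu_1)}\cdots T_{wn,n}^{(\nu_n)}\right)\right],$$ where for $i=1$ the factor $(1-i)^{\mu_i-\nu_i}$ is interpreted as $1$ if $\nu_1=\mu_1$ and $0$ otherwise.
   Context: $F$ is an algebraically closed field of characteristic zero; $\lambda=(\lambda_1,\dots,\lambda_n)$ is a composition of $N$ with positive parts and $\lambda_1\le\cdots\le\lambda_n$; $\sigma=(s_{i,j})$ with $s_{i,j}:=\lambda_j-\min(\lambda_i,\lambda_j)$. For compositions, $\nu\subseteq\mu$ means $0\le\nu_i\le\mu_i$ for all $i$, and $|\mu|=\sum_i\mu_i$. $Y_n$ is the $F$-algebra with generators $T_{i,j}^{(r)}$ ($1\le i,j\le n$, $r\ge1$) and relations $[T_{i,j}^{(r)},T_{k,l}^{(s)}]=\sum_{t=0}^{\min(r,s)-1}(T_{k,j}^{(t)}T_{i,l}^{(r+s-1-t)}-T_{k,j}^{(r+s-1-t)}T_{i,l}^{(t)})$, $T_{i,j}^{(0)}=\delta_{i,j}$. With $T(u)=(\sum_rT_{i,j}^{(r)}u^{-r})$ and Gauss factorization $T(u)=F(u)D(u)E(u)$ ($D$ diagonal with entries $D_i(u)=\sum_{r\ge0}D_i^{(r)}u^{-r}$,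 $E$ upper unitriangular with entries $E_{i,j}(u)=\sum_{r\ge1}E_{i,j}^{(r)}u^{-r}$, $F$ lower unitriangular with $(j,i)$-entries $F_{i,j}(u)=\sum_{r\ge1}F_{i,j}^{(r)}u^{-r}$), $Y_n(\sigma)\subseteq Y_n$ is the subalgebra generated by $D_i^{(r)}$ ($r>0$), $E_i^{(r)}:=E_{i,i+1}^{(r)}$ ($r>s_{i,i+1}$), $F_i^{(r)}:=F_{i,i+1}^{(r)}$ ($r>s_{i+1,i}$). Define ${}^\sigma E_{i,i+1}^{(r)}=E_i^{(r)}$, ${}^\sigma E_{i,j}^{(r)}=[{}^\sigma E_{i,j-1}^{(r-s_{j-1,j})},E_{j-1}^{(s_{j-1,j}+1)}]$ ($r>s_{i,j}$), ${}^\sigma F_{i,i+1}^{(r)}=F_i^{(r)}$, ${}^\sigma F_{i,j}^{(r)}=[F_{j-1}^{(s_{j,j-1}+1)},{}^\sigma F_{i,j-1}^{(r-s_{j,j-1})}]$ ($r>s_{j,i}$), ${}^\sigma E_{i,j}(u)=\sum_{r>s_{i,j}}{}^\sigma E_{i,j}^{(r)}u^{-r}$, ${}^\sigma F_{i,j}(u)=\sum_{r>s_{j,i}}{}^\sigma F_{i,j}^{(r)}u^{-r}$, ${}^\sigma E_{i,i}={}^\sigma F_{i,i}=1$, and ${}^\sigma T_{i,j}(u)=\sum_r{}^\sigma T_{i,j}^{(r)}u^{-r}:=\sum_{k=1}^{\min(i,j)}{}^\sigma F_{k,i}(u)D_k(u){}^\sigma E_{k,j}(u)$. $W(\lambda)$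 is the quotient of $Y_n(\sigma)$ by the two-sided ideal generated by $\{D_1^{(r)}:r>\lambda_1\}$, and $T_{i,j}^{(r)}$ denotes the image of ${}^\sigma T_{i,j}^{(r)}$ in $W(\lambda)$ (so $T_{i,j}^{(0)}=\delta_{i,j}$). It is known that $T_{i,j}^{(r)}=0$ in $W(\lambda)$ for $r>\lambda_j$, so with $T_{i,j}(u)=\sum_rT_{i,j}^{(r)}u^{-r}$ the polynomial $Z(u):=\mathrm{cdet}\big((u-j+1)^{\lambda_j}T_{i,j}(u-j+1)\big)_{1\le i,j\le n}\in W(\lambda)[u]$ is well defined, where $\mathrm{cdet}(a_{i,j}):=\sum_{w\in S_n}\mathrm{sgn}(w)a_{w1,1}\cdots a_{wn,n}$; write $Z(u)=u^N+Z_1u^{N-1}+\cdots+Z_N$. *)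

theory Defs
  imports "HOL-Combinatorics.Permutations"
begin

text \<open>Polynomials in a central variable u over a (possibly noncommutative) ring,
  represented by their coefficient functions (coefficient of u^k).\<close>

definition ncp_one :: "nat \<Rightarrow> 'a::ring_1" where
  "ncp_one = (\<lambda>k. if k = 0 then 1 else 0)"

definition ncp_mult :: "(nat \<Rightarrow> 'a::ring_1) \<Rightarrow> (nat \<Rightarrow> 'a) \<Rightarrow> nat \<Rightarrow> 'a" where
  "ncp_mult f g = (\<lambda>k. \<Sum>a\<le>k. f a * g (k - a))"

definition ncp_prod_list :: "(nat \<Rightarrow> 'a::ring_1) list \<Rightarrow> nat \<Rightarrow> 'a" where
  "ncp_prod_list ps = foldr ncp_mult ps ncp_one"

text \<open>Coefficient of u^k in (u + c)^m.\<close>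
definition shift_pow :: "int \<Rightarrow> nat \<Rightarrow> nat \<Rightarrow> 'a::ring_1" where
  "shift_pow c m k = of_int (int (m choose k) * c ^ (m - k))"

text \<open>Entry (i,j) of the matrix ((u-j+1)^{lambda_j} T_{i,j}(u-j+1)), where
  T_{i,j}(u) = sum_{s} T i j s u^{-s} and T i j s = 0 for s > lambda_j; as coefficient function:
  sum_{s <= lambda_j} T i j s (u-j+1)^{lambda_j - s}.\<close>
definition Zentry :: "(nat \<Rightarrow> nat) \<Rightarrow> (nat \<Rightarrow> nat \<Rightarrow> nat \<Rightarrow> 'a::ring_1) \<Rightarrow> nat \<Rightarrow> nat \<Rightarrow> nat \<Rightarrow> 'a" where
  "Zentry lam T i j = (\<lambda>k. \<Sum>s\<le>lam j. T i j s * shift_pow (1 - int j) (lam j - s) k)"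

definition Zpoly :: "nat \<Rightarrow> (nat \<Rightarrow> nat) \<Rightarrow> (nat \<Rightarrow> nat \<Rightarrow> nat \<Rightarrow> 'a::ring_1) \<Rightarrow> nat \<Rightarrow> 'a" where
  "Zpoly n lam T = (\<lambda>k. \<Sum>w | w permutes {1..n}.
      of_int (sign w) * ncp_prod_list (map (\<lambda>j. Zentry lam T (w j) j) [1..<n+1]) k)"

definition Zcoeff :: "nat \<Rightarrow> (nat \<Rightarrow> nat) \<Rightarrow> (nat \<Rightarrow> nat \<Rightarrow> nat \<Rightarrow> 'a::ring_1) \<Rightarrow> nat \<Rightarrow> 'a" where
  "Zcoeff n lam T r = Zpoly n lam T ((\<Sum>i=1..n. lam i) - r)"

end

theory Submission imports Defs begin

lemma sum_PiE_insert:
  assumes "x \<notin> S" "finite S" "\<And>j. finite (A j)"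
  shows "(\<Sum>k\<in>PiE (insert x S) A. F k) = (\<Sum>y\<in>A x. \<Sum>g\<in>PiE S A. F (g(x:=y)))"
proof -
  have "(\<Sum>k\<in>PiE (insert x S) A. F k) = (\<Sum>k\<in>(\<lambda>(y, g). g(x := y)) ` (A x \<times> PiE S A). F k)"
    by (simp add: PiE_insert_eq)
  also have "\<dots> = (\<Sum>p\<in>A x \<times> PiE S A. F ((\<lambda>(y, g). g(x := y)) p))"
    by (rule sum.reindex[OF inj_combinator[OF assms(1)], unfolded comp_def])
  also have "\<dots> = (\<Sum>y\<in>A x. \<Sum>g\<in>PiE S A. F (g(x:=y)))"
    by (subst sum.cartesian_product) (simp add: split_def)
  finally show ?thesis .
qed

lemma ncp_prod_coeff:
  fixes f :: "nat \<Rightarrow> nat \<Rightarrow> 'a::ring_1"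
  assumes "distinct xs" "K \<le> B"
  shows "ncp_prod_list (map f xs) K = (\<Sum>k\<in>PiE (set xs) (\<lambda>_. {..B}).
     if sum k (set xs) = K then prod_list (map (\<lambda>j. f j (k j)) xs) else 0)"
  using assms
proof (induction xs arbitrary: K)
  case Nil
  then show ?case by (simp add: ncp_prod_list_def ncp_one_def)
next
  case (Cons x xs)
  let ?S = "set xs"
  have xS: "x \<notin> ?S" and d: "distinct xs" using Cons.prems by auto
  have IH: "\<And>K'. K' \<le> B \<Longrightarrow> ncp_prod_list (map f xs) K' = (\<Sum>k\<in>PiE ?S (\<lambda>_. {..B}).
     if sum k ?S = K' then prod_list (map (\<lambda>j. f j (k j)) xs) else 0)"
    using Cons.IH d by blast
  have "ncp_prod_list (map f (x#xs)) K = (\<Sum>a\<le>K. f x a * ncp_prod_list (map f xs) (K - a))"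
    by (simp add: ncp_prod_list_def ncp_mult_def)
  also have "\<dots> = (\<Sum>a\<le>K. \<Sum>g\<in>PiE ?S (\<lambda>_. {..B}).
     if sum g ?S = K - a then f x a * prod_list (map (\<lambda>j. f j (g j)) xs) else 0)"
    using Cons.prems by (auto simp: IH sum_distrib_left intro!: sum.cong)
  also have "\<dots> = (\<Sum>a\<le>B. \<Sum>g\<in>PiE ?S (\<lambda>_. {..B}).
     if a + sum g ?S = K then f x a * prod_list (map (\<lambda>j. f j (g j)) xs) else 0)"
  proof -
    have "(\<Sum>a\<le>B. \<Sum>g\<in>PiE ?S (\<lambda>_. {..B}).
     if a + sum g ?S = K then f x a * prod_list (map (\<lambda>j. f j (g j)) xs) else 0)
      = (\<Sum>a\<le>K. \<Sum>g\<in>PiE ?S (\<lambda>_. {..B}).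
     if a + sum g ?S = K then f x a * prod_list (map (\<lambda>j. f j (g j)) xs) else 0)"
      using Cons.prems by (intro sum.mono_neutral_right) auto
    also have "\<dots> = (\<Sum>a\<le>K. \<Sum>g\<in>PiE ?S (\<lambda>_. {..B}).
     if sum g ?S = K - a then f x a * prod_list (map (\<lambda>j. f j (g j)) xs) else 0)"
      by (intro sum.cong refl) auto
    finally show ?thesis by simp
  qed
  also have "\<dots> = (\<Sum>k\<in>PiE (set (x#xs)) (\<lambda>_. {..B}).
     if sum k (set (x#xs)) = K then prod_list (map (\<lambda>j. f j (k j)) (x#xs)) else 0)"
  proof -
    have e1: "sum (g(x:=a)) (insert x ?S) = a + sum g ?S" for g :: "nat \<Rightarrow> nat" and a
    proof -
      have "sum (g(x:=a)) ?S = sum g ?S" by (rule sum.cong) (use xS in auto)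
      then show ?thesis using xS by simp
    qed
    have e2: "prod_list (map (\<lambda>j. f j ((g(x:=a)) j)) (x#xs)) = f x a * prod_list (map (\<lambda>j. f j (g j)) xs)" for g :: "nat \<Rightarrow> nat" and a
    proof -
      have "prod_list (map (\<lambda>j. f j (if j = x then a else g j)) xs) = prod_list (map (\<lambda>j. f j (g j)) xs)"
        using xS by (intro arg_cong[where f=prod_list] map_cong) auto
      then show ?thesis by simp
    qed
    show ?thesis
      by (simp only: set_simps sum_PiE_insert[OF xS finite_set finite_atMost] e1 e2)
  qed
  finally show ?case .
qed

lemma prod_list_sums:
  fixes g :: "nat \<Rightarrow> nat \<Rightarrow> 'a::ring_1"
  assumes "distinct xs" "\<And>j. finite (A j)"
  shows "prod_list (map (\<lambda>j. \<Sum>s\<in>A j. g j s) xs) = (\<Sum>s\<in>PiE (set xs) A. prod_list (map (\<lambda>j. g j (s j)) xs))"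
  using assms(1)
proof (induction xs)
  case Nil
  then show ?case by simp
next
  case (Cons x xs)
  have xS: "x \<notin> set xs" using Cons.prems by auto
  have e2: "map (\<lambda>j. g j (if j = x then a else h j)) xs = map (\<lambda>j. g j (h j)) xs" for h a
    using xS by (intro map_cong) auto
  have "prod_list (map (\<lambda>j. \<Sum>s\<in>A j. g j s) (x#xs)) = (\<Sum>y\<in>A x. \<Sum>h\<in>PiE (set xs) A. g x y * prod_list (map (\<lambda>j. g j (h j)) xs))"
    using Cons by (simp add: sum_distrib_left sum_distrib_right) (rule sum.swap)
  also have "\<dots> = (\<Sum>y\<in>A x. \<Sum>h\<in>PiE (set xs) A. prod_list (map (\<lambda>j. g j ((h(x:=y)) j)) (x#xs)))"
    by (simp add: e2)
  also have "\<dots> = (\<Sum>s\<in>PiE (set (x#xs)) A. prod_list (map (\<lambda>j. g j (s j)) (x#xs)))"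
    by (simp only: set_simps sum_PiE_insert[OF xS finite_set assms(2)])
  finally show ?case .
qed

lemma prod_list_of_int:
  fixes a :: "nat \<Rightarrow> 'a::ring_1"
  assumes "distinct xs"
  shows "prod_list (map (\<lambda>j. a j * of_int (c j)) xs) = prod_list (map a xs) * of_int (prod c (set xs))"
  using assms
proof (induction xs)
  case Nil
  then show ?case by simp
next
  case (Cons x xs)
  have xS: "x \<notin> set xs" and d: "distinct xs" using Cons.prems by auto
  have "prod_list (map (\<lambda>j. a j * of_int (c j)) (x#xs))
     = (a x * of_int (c x)) * (prod_list (map a xs) * of_int (prod c (set xs)))"
    using Cons.IH[OF d] by simp
  also have "\<dots> = a x * (of_int (c x) * prod_list (map a xs)) * of_int (prod c (set xs))"
    by (simp only: mult.assoc)
  also have "\<dots> = a x * (prod_list (map a xs) * of_int (c x)) * of_int (prod c (set xs))"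
    by (simp only: mult_of_int_commute[of "c x"])
  also have "\<dots> = prod_list (map a (x#xs)) * of_int (prod c (set (x#xs)))"
    using xS by (simp only: mult.assoc of_int_mult list.map prod_list.Cons set_simps prod.insert[OF finite_set xS])
  finally show ?case .
qed

lemma per_w:
  fixes G :: "nat \<Rightarrow> nat \<Rightarrow> 'a::ring_1" and cc :: "nat \<Rightarrow> int"
  assumes d: "distinct xs" and I: "I = set xs" and N: "N = sum lam I" and rN: "r \<le> N"
  shows "ncp_prod_list (map (\<lambda>j k. \<Sum>s\<le>lam j. G j s * shift_pow (cc j) (lam j - s) k) xs) (N - r) =
    (\<Sum>\<mu> \<in> {\<mu> \<in> PiE I (\<lambda>i. {..lam i}). sum \<mu> I = r}.
      \<Sum>\<nu> \<in> PiE I (\<lambda>i. {..\<mu> i}).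
        of_int (\<Prod>i\<in>I. cc i ^ (\<mu> i - \<nu> i) * int ((lam i - \<nu> i) choose (lam i - \<mu> i)))
        * prod_list (map (\<lambda>j. G j (\<nu> j)) xs))"
proof -
  define P where "P \<nu> = prod_list (map (\<lambda>j. G j (\<nu> j)) xs)" for \<nu>
  define c where "c k s = (\<Prod>j\<in>I. int ((lam j - s j) choose k j) * cc j ^ (lam j - s j - k j))" for k s :: "nat \<Rightarrow> nat"
  define F where "F k = (\<Sum>s\<in>PiE I (\<lambda>j. {..lam j}). P s * of_int (c k s))" for k
  define K where "K = N - r"
  have fI: "finite I" using I by simp
  have S0: "ncp_prod_list (map (\<lambda>j k. \<Sum>s\<le>lam j. G j s * shift_pow (cc j) (lam j - s) k) xs) K =
    (\<Sum>k\<in>PiE I (\<lambda>_. {..N}). if sum k I = K then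
        prod_list (map (\<lambda>j. \<Sum>s\<le>lam j. G j s * shift_pow (cc j) (lam j - s) (k j)) xs) else 0)"
    unfolding I by (rule ncp_prod_coeff[OF d]) (simp add: K_def)
  have S1: "prod_list (map (\<lambda>j. \<Sum>s\<le>lam j. G j s * shift_pow (cc j) (lam j - s) (k j)) xs) = F k" for k
  proof -
    have "prod_list (map (\<lambda>j. \<Sum>s\<le>lam j. G j s * shift_pow (cc j) (lam j - s) (k j)) xs)
      = (\<Sum>s\<in>PiE I (\<lambda>j. {..lam j}). prod_list (map (\<lambda>j. G j (s j) * shift_pow (cc j) (lam j - s j) (k j)) xs))"
      unfolding I by (rule prod_list_sums[OF d]) simp
    also have "\<dots> = F k"
      unfolding F_def P_def c_def shift_pow_def I
      by (rule sum.cong[OF refl], rule prod_list_of_int[OF d])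
    finally show ?thesis .
  qed
  have S2: "(\<Sum>k\<in>PiE I (\<lambda>_. {..N}). if sum k I = K then F k else 0)
     = (\<Sum>k\<in>PiE I (\<lambda>j. {..lam j}). if sum k I = K then F k else 0)"
  proof (rule sum.mono_neutral_right)
    show "finite (PiE I (\<lambda>_. {..N}))" using fI by (simp add: finite_PiE)
    show "PiE I (\<lambda>j. {..lam j}) \<subseteq> PiE I (\<lambda>_. {..N})"
    proof (rule PiE_mono)
      fix j assume "j \<in> I"
      then have "lam j \<le> N" unfolding N using fI by (simp add: member_le_sum)
      then show "{..lam j} \<subseteq> {..N}" by auto
    qed
    show "\<forall>k\<in>PiE I (\<lambda>_. {..N}) - PiE I (\<lambda>j. {..lam j}). (if sum k I = K then F k else 0) = 0"
    proof
      fix k assume k: "k \<in> PiE I (\<lambda>_. {..N}) - PiE I (\<lambda>j. {..lam j})"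
      then obtain j where j: "j \<in> I" "k j > lam j" by (auto simp: PiE_iff not_le)
      have "c k s = 0" for s
        unfolding c_def by (rule prod_zero[OF fI], rule bexI[of _ j]) (use j in auto)
      then have "F k = 0" unfolding F_def by simp
      then show "(if sum k I = K then F k else 0) = 0" by simp
    qed
  qed
  have S3: "(\<Sum>k\<in>PiE I (\<lambda>j. {..lam j}). if sum k I = K then F k else 0)
     = (\<Sum>k\<in>{k\<in>PiE I (\<lambda>j. {..lam j}). sum k I = K}. F k)"
    using fI by (simp add: sum.inter_filter finite_PiE)
  define h where "h \<mu> = restrict (\<lambda>j. lam j - \<mu> j) I" for \<mu> :: "nat \<Rightarrow> nat"
  have hP: "h \<mu> \<in> PiE I (\<lambda>i. {..lam i})" if "\<mu> \<in> PiE I (\<lambda>i. {..lam i})" for \<mu>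
    unfolding h_def restrict_PiE_iff by simp
  have hh: "h (h \<mu>) = \<mu>" if m: "\<mu> \<in> PiE I (\<lambda>i. {..lam i})" for \<mu>
  proof (rule ext)
    fix x
    show "h (h \<mu>) x = \<mu> x"
    proof (cases "x \<in> I")
      case True
      then have "\<mu> x \<le> lam x" using m by (auto simp: PiE_iff)
      with True show ?thesis by (simp add: h_def)
    next
      case False
      then show ?thesis using PiE_arb[OF m False] by (simp add: h_def)
    qed
  qed
  have hs: "sum (h \<mu>) I = N - sum \<mu> I" if m: "\<mu> \<in> PiE I (\<lambda>i. {..lam i})" for \<mu>
  proof -
    have "sum (h \<mu>) I = sum (\<lambda>j. lam j - \<mu> j) I" unfolding h_def by (rule sum.cong) auto
    also have "\<dots> = sum lam I - sum \<mu> I"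
      by (rule sum_subtractf_nat) (use m in \<open>auto simp: PiE_iff\<close>)
    finally show ?thesis unfolding N .
  qed
  have S4: "(\<Sum>k\<in>{k\<in>PiE I (\<lambda>j. {..lam j}). sum k I = K}. F k)
     = (\<Sum>\<mu> \<in> {\<mu> \<in> PiE I (\<lambda>i. {..lam i}). sum \<mu> I = r}. F (h \<mu>))"
  proof (rule sum.reindex_bij_witness[where i=h and j=h])
    fix a assume a: "a \<in> {k\<in>PiE I (\<lambda>j. {..lam j}). sum k I = K}"
    then show "h (h a) = a" using hh by blast
    show "F (h (h a)) = F a" using a hh by auto
    have "sum (h a) I = r" using a hs[of a] rN by (auto simp: K_def)
    then show "h a \<in> {\<mu> \<in> PiE I (\<lambda>i. {..lam i}). sum \<mu> I = r}" using a hP by blast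
  next
    fix b assume b: "b \<in> {\<mu> \<in> PiE I (\<lambda>i. {..lam i}). sum \<mu> I = r}"
    then show "h (h b) = b" using hh by blast
    have "sum (h b) I = K" using b hs[of b] by (auto simp: K_def)
    then show "h b \<in> {k\<in>PiE I (\<lambda>j. {..lam j}). sum k I = K}" using b hP by blast
  qed
  have S5: "F (h \<mu>) = (\<Sum>\<nu> \<in> PiE I (\<lambda>i. {..\<mu> i}).
        of_int (\<Prod>i\<in>I. cc i ^ (\<mu> i - \<nu> i) * int ((lam i - \<nu> i) choose (lam i - \<mu> i)))
        * P \<nu>)" if m: "\<mu> \<in> PiE I (\<lambda>i. {..lam i})" for \<mu>
  proof -
    have "F (h \<mu>) = (\<Sum>s\<in>PiE I (\<lambda>j. {..\<mu> j}). P s * of_int (c (h \<mu>) s))"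
      unfolding F_def
    proof (rule sum.mono_neutral_right)
      show "finite (PiE I (\<lambda>j. {..lam j}))" using fI by (simp add: finite_PiE)
      show "PiE I (\<lambda>j. {..\<mu> j}) \<subseteq> PiE I (\<lambda>j. {..lam j})"
        using m by (intro PiE_mono) (auto simp: PiE_iff)
      show "\<forall>s\<in>PiE I (\<lambda>j. {..lam j}) - PiE I (\<lambda>j. {..\<mu> j}). P s * of_int (c (h \<mu>) s) = 0"
      proof
        fix s assume s: "s \<in> PiE I (\<lambda>j. {..lam j}) - PiE I (\<lambda>j. {..\<mu> j})"
        then obtain j where j: "j \<in> I" "s j > \<mu> j" by (auto simp: PiE_iff not_le)
        have le: "\<mu> j \<le> lam j" "s j \<le> lam j" using m j s by (auto simp: PiE_iff)
        have "c (h \<mu>) s = 0"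
          unfolding c_def h_def by (rule prod_zero[OF fI], rule bexI[of _ j]) (use j le in auto)
        then show "P s * of_int (c (h \<mu>) s) = 0" by simp
      qed
    qed
    also have "\<dots> = (\<Sum>\<nu> \<in> PiE I (\<lambda>i. {..\<mu> i}).
        of_int (\<Prod>i\<in>I. cc i ^ (\<mu> i - \<nu> i) * int ((lam i - \<nu> i) choose (lam i - \<mu> i)))
        * P \<nu>)"
    proof (rule sum.cong[OF refl])
      fix \<nu> assume v: "\<nu> \<in> PiE I (\<lambda>i. {..\<mu> i})"
      have "c (h \<mu>) \<nu> = (\<Prod>i\<in>I. cc i ^ (\<mu> i - \<nu> i) * int ((lam i - \<nu> i) choose (lam i - \<mu> i)))"
        unfolding c_def h_def
      proof (rule prod.cong[OF refl])
        fix i assume i: "i \<in> I"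
        have "\<nu> i \<le> \<mu> i" "\<mu> i \<le> lam i" using i v m by (auto simp: PiE_iff)
        then show "int ((lam i - \<nu> i) choose restrict (\<lambda>j. lam j - \<mu> j) I i) *
              cc i ^ (lam i - \<nu> i - restrict (\<lambda>j. lam j - \<mu> j) I i) =
              cc i ^ (\<mu> i - \<nu> i) * int ((lam i - \<nu> i) choose (lam i - \<mu> i))"
          using i by (simp add: mult.commute)
      qed
      then show "P \<nu> * of_int (c (h \<mu>) \<nu>) = of_int (\<Prod>i\<in>I. cc i ^ (\<mu> i - \<nu> i) * int ((lam i - \<nu> i) choose (lam i - \<mu> i))) * P \<nu>"
        by (simp add: mult_of_int_commute)
    qed
    finally show ?thesis .
  qed
  show ?thesis
    unfolding K_def[symmetric] S0 S1 S2 S3 S4 P_def[symmetric]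
    by (rule sum.cong[OF refl]) (use S5 in auto)
qed

theorem lemma3p5:
  fixes n :: nat and lam :: "nat \<Rightarrow> nat" and T :: "nat \<Rightarrow> nat \<Rightarrow> nat \<Rightarrow> 'a::ring_1"
    and r :: nat
  assumes pos: "\<And>i. i \<in> {1..n} \<Longrightarrow> 0 < lam i"
    and mono: "\<And>i j. i \<in> {1..n} \<Longrightarrow> j \<in> {1..n} \<Longrightarrow> i \<le> j \<Longrightarrow> lam i \<le> lam j"
    and T0: "\<And>i j. T i j 0 = (if i = j then 1 else 0)"
    and Tvan: "\<And>i j s. i \<in> {1..n} \<Longrightarrow> j \<in> {1..n} \<Longrightarrow> lam j < s \<Longrightarrow> T i j s = 0"
    and r: "1 \<le> r" "r \<le> (\<Sum>i=1..n. lam i)"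
  shows "Zcoeff n lam T r =
    (\<Sum>\<mu> \<in> {\<mu> \<in> PiE {1..n} (\<lambda>i. {..lam i}). (\<Sum>i=1..n. \<mu> i) = r}.
      \<Sum>\<nu> \<in> PiE {1..n} (\<lambda>i. {..\<mu> i}).
        of_int (\<Prod>i=1..n. (1 - int i) ^ (\<mu> i - \<nu> i) * int ((lam i - \<nu> i) choose (lam i - \<mu> i)))
        * (\<Sum>w | w permutes {1..n}.
             of_int (sign w) * prod_list (map (\<lambda>j. T (w j) j (\<nu> j)) [1..<n+1])))"
proof -
  define N where "N = (\<Sum>i=1..n. lam i)"
  define M where "M = {\<mu> \<in> PiE {1..n} (\<lambda>i. {..lam i}). (\<Sum>i=1..n. \<mu> i) = r}"
  define V where "V \<mu> = PiE {1..n} (\<lambda>i. {..\<mu> i})" for \<mu> :: "nat \<Rightarrow> nat"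
  define D where "D \<mu> \<nu> = (of_int (\<Prod>i=1..n. (1 - int i) ^ (\<mu> i - \<nu> i) * int ((lam i - \<nu> i) choose (lam i - \<mu> i))) :: 'a)" for \<mu> \<nu> :: "nat \<Rightarrow> nat"
  define P where "P w \<nu> = prod_list (map (\<lambda>j. T (w j) j (\<nu> j)) [1..<n+1])" for w \<nu> :: "nat \<Rightarrow> nat"
  define W where "W = {w. w permutes {1..n}}"
  have sI: "set [1..<n+1] = {1..n}" by auto
  have pw: "ncp_prod_list (map (\<lambda>j. Zentry lam T (w j) j) [1..<n+1]) (N - r)
     = (\<Sum>\<mu>\<in>M. \<Sum>\<nu>\<in>V \<mu>. D \<mu> \<nu> * P w \<nu>)" for w
    unfolding Zentry_def M_def V_def D_def P_def
    by (rule per_w[where G="\<lambda>j s. T (w j) j s" and cc="\<lambda>j. 1 - int j", OF _ sI[symmetric]])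
       (use r in \<open>auto simp: N_def\<close>)
  have fM: "finite M" unfolding M_def by (simp add: finite_PiE)
  have fV: "finite (V \<mu>)" for \<mu> unfolding V_def by (simp add: finite_PiE)
  have fW: "finite W" unfolding W_def by (simp add: finite_permutations)
  have "Zcoeff n lam T r = (\<Sum>w\<in>W. of_int (sign w) * (\<Sum>\<mu>\<in>M. \<Sum>\<nu>\<in>V \<mu>. D \<mu> \<nu> * P w \<nu>))"
    unfolding Zcoeff_def Zpoly_def N_def[symmetric] W_def pw ..
  also have "\<dots> = (\<Sum>w\<in>W. \<Sum>\<mu>\<in>M. \<Sum>\<nu>\<in>V \<mu>. of_int (sign w) * (D \<mu> \<nu> * P w \<nu>))"
    by (simp add: sum_distrib_left)
  also have "\<dots> = (\<Sum>\<mu>\<in>M. \<Sum>w\<in>W. \<Sum>\<nu>\<in>V \<mu>. of_int (sign w) * (D \<mu> \<nu> * P w \<nu>))"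
    by (rule sum.swap)
  also have "\<dots> = (\<Sum>\<mu>\<in>M. \<Sum>\<nu>\<in>V \<mu>. \<Sum>w\<in>W. of_int (sign w) * (D \<mu> \<nu> * P w \<nu>))"
    by (rule sum.cong[OF refl], rule sum.swap)
  also have "\<dots> = (\<Sum>\<mu>\<in>M. \<Sum>\<nu>\<in>V \<mu>. D \<mu> \<nu> * (\<Sum>w\<in>W. of_int (sign w) * P w \<nu>))"
  proof -
    have c: "of_int a * (of_int b * x) = of_int b * (of_int a * (x::'a))" for a b x
      by (simp only: mult.assoc[symmetric] of_int_mult[symmetric] mult.commute[of a b])
    show ?thesis unfolding D_def by (simp only: sum_distrib_left c)
  qed
  finally show ?thesis unfolding M_def V_def D_def P_def W_def .
qed

end
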